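(* Let $S$ be a subspace of $\mathbb{R}^n$ and $\mathcal{M}_S=\{A\in\mathbb{R}^{n\times n}: A=A^\intercal,\ \mathrm{range}(A)=S,\ A\succeq0\}$. Then $A\mapsto\log\mathrm{Det}(A)$ is concave on any convex subset of $\mathcal{M}_S$.
   Context: For $A\in\mathbb{R}^{n\times n}$ the pseudo-determinant is $\mathrm{Det}(A)=\lim_{\epsilon\to0}\det(A+\epsilon I)/\epsilon^{n-\mathrm{rank}(A)}$; $\mathrm{range}(A)$ is the column space of $A$. *)

theory Defs
  imports "HOL-Analysis.Analysis"
begin

definition pdet :: "real^'n^'n \<Rightarrow> real" where
  "pdet A = Lim (at (0::real))
     (\<lambda>e. det (A + e *\<^sub>R mat 1) / e ^ (CARD('n) - rank A))"

definition col_space :: "real^'n^'m \<Rightarrow> (real^'m) set" where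
  "col_space A = range (\<lambda>x. A *v x)"

definition M_set :: "(real^'n) set \<Rightarrow> (real^'n^'n) set" where
  "M_set S = {A. transpose A = A \<and> col_space A = S \<and> (\<forall>x. 0 \<le> x \<bullet> (A *v x))}"

end

theory Submission
  imports Defs
begin

lemma dot_mat_transpose: "(x::real^'n) \<bullet> (A *v y) = (transpose A *v x) \<bullet> y"
  by (metis dot_lmul_matrix inner_commute vector_transpose_matrix)

lemma sym_dot: "transpose A = A \<Longrightarrow> (x::real^'n) \<bullet> (A *v y) = y \<bullet> (A *v x)"
  by (metis dot_mat_transpose inner_commute)

lemma cont_quad: "continuous_on S (\<lambda>x::real^'n. x \<bullet> (A *v x))"
  by (intro continuous_intros continuous_on_id linear_continuous_on matrix_vector_mul_linear)

lemma quad_bound_eigen: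
  fixes A :: "real^'n^'n"
  assumes sym: "transpose A = A" and W: "subspace W" and inv: "\<forall>x\<in>W. A *v x \<in> W"
    and v: "v \<in> W" "norm v = 1"
    and bound: "\<forall>x\<in>W. x \<bullet> (A *v x) \<le> l * (x \<bullet> x)" and lv: "v \<bullet> (A *v v) = l"
  shows "A *v v = l *\<^sub>R v"
proof -
  define w where "w = A *v v - l *\<^sub>R v"
  have vv: "v \<bullet> v = 1" using v by (simp add: dot_square_norm)
  have wW: "w \<in> W" unfolding w_def using inv v W by (simp add: subspace_diff subspace_scale)
  have wv: "w \<bullet> v = 0" unfolding w_def using lv vv
    by (simp add: inner_diff_left inner_commute[of "A *v v" v])
  have c0: "w \<bullet> (A *v v) = 0"
  proof -
    define c where "c = w \<bullet> (A *v v)"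
    define d where "d = w \<bullet> (A *v w) - l * (w \<bullet> w)"
    have key: "2 * s * c + s^2 * d \<le> 0" for s
    proof -
      have "v + s *\<^sub>R w \<in> W" using v wW W by (simp add: subspace_add subspace_scale)
      then have "(v + s *\<^sub>R w) \<bullet> (A *v (v + s *\<^sub>R w)) \<le> l * ((v + s *\<^sub>R w) \<bullet> (v + s *\<^sub>R w))"
        using bound by blast
      moreover have "v \<bullet> (A *v w) = w \<bullet> (A *v v)" using sym_dot[OF sym] .
      ultimately show ?thesis using lv vv wv
        by (simp add: matrix_vector_right_distrib matrix_vector_mult_scaleR inner_add_left inner_add_right
            c_def d_def algebra_simps power2_eq_square inner_commute)
    qed
    define e where "e = \<bar>d\<bar> + 1"
    have e: "e > 0" unfolding e_def by linarith
    have "2 * (c / e) * c + (c / e)^2 * d \<le> 0" by (rule key)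
    moreover have "2 * (c / e) * c + (c / e)^2 * d = (c^2 * (2 * e + d)) / e^2"
      using e by (simp add: field_simps power2_eq_square)
    ultimately have "(c^2 * (2 * e + d)) / e^2 \<le> 0" by simp
    then have "c^2 * (2 * e + d) \<le> 0" using e by (simp add: divide_le_0_iff)
    moreover have "2 * e + d > 0" unfolding e_def by (simp add: abs_if)
    ultimately have "c^2 \<le> 0" by (simp add: mult_le_0_iff)
    then show ?thesis unfolding c_def by simp
  qed
  have "w \<bullet> w = 0" using c0 wv unfolding w_def[symmetric]
    by (metis (no_types, lifting) diff_zero inner_diff_right inner_scaleR_right mult_zero_right w_def)
  then show ?thesis unfolding w_def by simp
qed

lemma spectral_subspace:
  fixes A :: "real^'n^'n"
  assumes sym: "transpose A = A"
  shows "subspace W \<Longrightarrow> (\<forall>x\<in>W. A *v x \<in> W) \<Longrightarrow>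
    \<exists>B. B \<subseteq> W \<and> pairwise orthogonal B \<and> (\<forall>b\<in>B. norm b = 1 \<and> (\<exists>l. A *v b = l *\<^sub>R b)) \<and> W \<subseteq> span B"
proof (induction "dim W" arbitrary: W rule: less_induct)
  case less
  note W = less.prems(1) and inv = less.prems(2)
  show ?case
  proof (cases "W \<subseteq> {0}")
    case True
    then show ?thesis by (intro exI[of _ "{}"]) auto
  next
    case False
    then obtain x where x: "x \<in> W" "x \<noteq> 0" by auto
    define K where "K = W \<inter> sphere 0 1"
    have "x /\<^sub>R norm x \<in> K" using x W unfolding K_def by (simp add: subspace_scale)
    then have Kne: "K \<noteq> {}" by auto
    have Kc: "compact K" unfolding K_def using W by (intro closed_Int_compact closed_subspace compact_sphere)
    obtain v where vK: "v \<in> K" and vmax: "\<forall>y\<in>K. y \<bullet> (A *v y) \<le> v \<bullet> (A *v v)"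
      using continuous_attains_sup[OF Kc Kne cont_quad] by blast
    define l where "l = v \<bullet> (A *v v)"
    have vW: "v \<in> W" and vn: "norm v = 1" using vK unfolding K_def by auto
    have bound: "\<forall>y\<in>W. y \<bullet> (A *v y) \<le> l * (y \<bullet> y)"
    proof
      fix y assume yW: "y \<in> W"
      show "y \<bullet> (A *v y) \<le> l * (y \<bullet> y)"
      proof (cases "y = 0")
        case True then show ?thesis by simp
      next
        case False
        define z where "z = y /\<^sub>R norm y"
        have "z \<in> K" unfolding K_def z_def using yW W False by (simp add: subspace_scale)
        then have "z \<bullet> (A *v z) \<le> l" using vmax unfolding l_def by blast
        moreover have "z \<bullet> (A *v z) = (y \<bullet> (A *v y)) / (y \<bullet> y)"
          unfolding z_def using False
          by (simp add: matrix_vector_mult_scaleR dot_square_norm power2_eq_square field_simps)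
        moreover have "y \<bullet> y > 0" using False by simp
        ultimately show ?thesis by (simp add: divide_le_eq mult.commute)
      qed
    qed
    have eig: "A *v v = l *\<^sub>R v"
      by (rule quad_bound_eigen[OF sym W inv vW vn bound]) (simp add: l_def)
    define W' where "W' = {y\<in>W. y \<bullet> v = 0}"
    have W'sub: "subspace W'" unfolding W'_def subspace_def using W
      by (auto simp: subspace_0 subspace_add subspace_scale inner_add_left)
    have inv': "\<forall>y\<in>W'. A *v y \<in> W'"
    proof
      fix y assume y: "y \<in> W'"
      have "(A *v y) \<bullet> v = y \<bullet> (A *v v)" using sym_dot[OF sym, of v y] by (simp add: inner_commute)
      also have "\<dots> = 0" using y eig unfolding W'_def by (simp add: inner_commute)
      finally show "A *v y \<in> W'" using y inv unfolding W'_def by auto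
    qed
    have vv: "v \<bullet> v = 1" using vn by (simp add: dot_square_norm)
    have "W' \<subset> W" using vW vv unfolding W'_def by (metis (mono_tags, lifting) mem_Collect_eq psubsetI subsetI zero_neq_one)
    then have "span W' \<subset> span W" using W W'sub by (metis span_eq_iff)
    then have "dim W' < dim W" by (rule dim_psubset)
    then obtain B' where B': "B' \<subseteq> W'" "pairwise orthogonal B'"
       "\<forall>b\<in>B'. norm b = 1 \<and> (\<exists>l. A *v b = l *\<^sub>R b)" "W' \<subseteq> span B'"
      using less.hyps[OF _ W'sub inv'] by blast
    show ?thesis
    proof (intro exI[of _ "insert v B'"] conjI)
      show "insert v B' \<subseteq> W" using B'(1) vW unfolding W'_def by auto
      show "pairwise orthogonal (insert v B')"
        using B'(1,2) unfolding pairwise_insert W'_def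
        by (auto simp: orthogonal_def inner_commute)
      show "\<forall>b\<in>insert v B'. norm b = 1 \<and> (\<exists>l. A *v b = l *\<^sub>R b)" using B'(3) vn eig by auto
      show "W \<subseteq> span (insert v B')"
      proof
        fix y assume yW: "y \<in> W"
        have "y - (y \<bullet> v) *\<^sub>R v \<in> W'" unfolding W'_def using yW vW W vv
          by (simp add: subspace_diff subspace_scale inner_diff_left)
        then have "y - (y \<bullet> v) *\<^sub>R v \<in> span B'" using B'(4) by blast
        then show "y \<in> span (insert v B')" unfolding span_breakdown_eq by blast
      qed
    qed
  qed
qed

definition dg :: "('n::finite \<Rightarrow> real) \<Rightarrow> real^'n^'n" where
  "dg d = (\<chi> i j. if i = j then d i else 0)"

lemma spectral:
  fixes A :: "real^'n^'n"
  assumes sym: "transpose A = A"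
  obtains Q d where "orthogonal_matrix Q" "A = Q ** dg d ** transpose Q"
proof -
  obtain B where B: "pairwise orthogonal B" "\<forall>b\<in>B. norm b = 1 \<and> (\<exists>l. A *v b = l *\<^sub>R b)"
      "UNIV \<subseteq> span B"
    using spectral_subspace[OF sym, of UNIV] by auto
  have "0 \<notin> B" using B(2) by force
  then have indB: "independent B" using B(1) pairwise_orthogonal_independent by blast
  have finB: "finite B" using indB by (rule finiteI_independent)
  have "dim B = card B" using indB by (rule dim_eq_card_independent)
  moreover have "dim B = dim (UNIV :: (real^'n) set)"
    by (metis B(3) dim_span top.extremum_uniqueI)
  ultimately have cardB: "card B = CARD('n)" by simp
  obtain f where f: "bij_betw f (UNIV::'n set) B"
    using finite_same_card_bij[of "UNIV::'n set" B] finB cardB by auto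
  have fB: "f j \<in> B" for j using f by (auto simp: bij_betw_def)
  have finj: "f i \<noteq> f j" if "i \<noteq> j" for i j using f that by (auto simp: bij_betw_def inj_on_def)
  have "\<forall>j. \<exists>l. A *v f j = l *\<^sub>R f j" using B(2) fB by blast
  then obtain lam where lam: "\<And>j. A *v f j = lam j *\<^sub>R f j" by metis
  define Q :: "real^'n^'n" where "Q = (\<chi> i j. f j $ i)"
  have colQ: "column j Q = f j" for j unfolding Q_def column_def by (simp add: vec_eq_iff)
  have orth: "orthogonal_matrix Q"
    unfolding orthogonal_matrix_orthonormal_columns colQ
    using B fB finj by (auto simp: pairwise_def)
  have AQ: "A ** Q = Q ** dg lam"
  proof -
    have "(A ** Q) $ i $ j = (Q ** dg lam) $ i $ j" for i j
    proof -
      have "(A ** Q) $ i $ j = (A *v f j) $ i"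
        by (simp add: matrix_matrix_mult_def matrix_vector_mult_def Q_def)
      also have "\<dots> = lam j * f j $ i" by (simp add: lam)
      also have "\<dots> = (Q ** dg lam) $ i $ j"
        by (simp add: matrix_matrix_mult_def dg_def Q_def if_distrib[of "\<lambda>x. _ * x"] cong: if_cong)
      finally show ?thesis .
    qed
    then show ?thesis by (simp add: vec_eq_iff)
  qed
  have "A = A ** (Q ** transpose Q)" using orth by (simp add: orthogonal_matrix_def)
  also have "\<dots> = Q ** dg lam ** transpose Q" by (simp add: matrix_mul_assoc AQ)
  finally show ?thesis using that orth by blast
qed

lemma dg_mul: "dg a ** dg b = dg (\<lambda>i. a i * b i)"
  by (simp add: dg_def matrix_matrix_mult_def vec_eq_iff if_distrib[of "\<lambda>x. x * _"] cong: if_cong)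

lemma dg_add: "dg a + dg b = dg (\<lambda>i. a i + b i)"
  by (simp add: dg_def vec_eq_iff)

lemma dg_scale: "c *\<^sub>R dg a = dg (\<lambda>i. c * a i)"
  by (simp add: dg_def vec_eq_iff)

lemma mat1_dg: "mat 1 = dg (\<lambda>_. 1)"
  by (simp add: dg_def mat_def vec_eq_iff)

lemma det_dg: "det (dg a) = prod a UNIV"
  by (subst det_diagonal) (auto simp: dg_def)

lemma transpose_dg: "transpose (dg a) = dg a"
  by (simp add: dg_def transpose_def vec_eq_iff)

lemma dg_vec: "dg a *v x = (\<chi> i. a i * x $ i)"
  by (simp add: dg_def matrix_vector_mult_def vec_eq_iff if_distrib[of "\<lambda>x. x * _"] cong: if_cong)

lemma mmul_scale_right: "(M::real^'n^'n) ** (c *\<^sub>R N) = c *\<^sub>R (M ** N)"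
  by (simp add: matrix_matrix_mult_def vec_eq_iff sum_distrib_left algebra_simps)

lemma mmul_scale_left: "(c *\<^sub>R M::real^'n^'n) ** N = c *\<^sub>R (M ** N)"
  by (simp add: matrix_matrix_mult_def vec_eq_iff sum_distrib_left algebra_simps)

lemma mmul_add_right: "((A::real^'n^'n) + B) ** C = A ** C + B ** C"
  by (simp add: matrix_matrix_mult_def vec_eq_iff sum.distrib algebra_simps)

lemma orth_QQt: "orthogonal_matrix Q \<Longrightarrow> Q ** transpose Q = mat 1"
  by (simp add: orthogonal_matrix_def)

lemma orth_QtQ: "orthogonal_matrix Q \<Longrightarrow> transpose Q ** Q = mat 1"
  by (simp add: orthogonal_matrix_def)

lemma conj_mul:
  "orthogonal_matrix Q \<Longrightarrow> (Q ** M ** transpose Q) ** (Q ** N ** transpose Q) = Q ** (M ** N) ** transpose Q"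
  by (simp add: matrix_mul_assoc) (metis matrix_mul_assoc matrix_mul_rid orth_QtQ)

lemma conj_add:
  "(Q ** M ** transpose Q) + (Q ** N ** transpose Q) = Q ** (M + N) ** transpose (Q::real^'n^'n)"
  by (simp add: matrix_add_ldistrib mmul_add_right)

lemma conj_scale:
  "c *\<^sub>R (Q ** M ** transpose Q) = Q ** (c *\<^sub>R M) ** transpose (Q::real^'n^'n)"
  by (simp add: mmul_scale_left mmul_scale_right)

lemma conj_id: "orthogonal_matrix Q \<Longrightarrow> Q ** mat 1 ** transpose Q = mat 1"
  by (simp add: orth_QQt)

lemma det_conj: "orthogonal_matrix Q \<Longrightarrow> det (Q ** dg a ** transpose Q) = prod a UNIV"
proof -
  assume Q: "orthogonal_matrix Q"
  have "det Q * det Q = 1" using det_orthogonal_matrix[OF Q] by auto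
  then show ?thesis by (simp add: det_mul det_transpose det_dg)
qed

lemma rank_dg: fixes d :: "'n::finite \<Rightarrow> real" shows "rank (dg d) = card {i. d i \<noteq> 0}"
proof -
  define g where "g j = (d j *\<^sub>R axis j 1 :: real^'n)" for j
  define NZ where "NZ = {i. d i \<noteq> 0}"
  have colg: "column j (dg d) = g j" for j by (simp add: column_def g_def dg_def vec_eq_iff axis_def)
  have cols: "columns (dg d) = range g" unfolding columns_def colg[symmetric] by auto
  have "span (range g) = span (g ` NZ)"
  unfolding span_eq
  proof (intro conjI)
    show "g ` NZ \<subseteq> span (range g)" by (auto intro: span_base)
    have "range g \<subseteq> insert 0 (g ` NZ)" by (auto simp: g_def NZ_def)
    then show "range g \<subseteq> span (g ` NZ)"
      by (metis span_insert_0 span_superset subset_trans)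
  qed
  then have "dim (range g) = dim (g ` NZ)" by (metis dim_span)
  moreover have "independent (g ` NZ)"
  proof (rule pairwise_orthogonal_independent)
    show "pairwise orthogonal (g ` NZ)"
      by (auto simp: pairwise_def orthogonal_def g_def inner_axis_axis)
    show "0 \<notin> g ` NZ" by (auto simp: g_def NZ_def vec_eq_iff axis_def) (metis one_neq_zero)
  qed
  moreover have "inj_on g NZ"
    by (auto simp: inj_on_def g_def NZ_def vec_eq_iff axis_def)
  ultimately have "dim (range g) = card NZ" by (simp add: dim_eq_card_independent card_image)
  then show ?thesis by (simp add: column_rank_def cols NZ_def)
qed

lemma rank_conj: assumes Q: "orthogonal_matrix Q" shows "rank (Q ** dg d ** transpose Q) = rank (dg d)"
proof -
  have "dg d = transpose Q ** (Q ** dg d ** transpose Q) ** Q"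
    using Q by (simp add: matrix_mul_assoc orth_QtQ) (metis matrix_mul_assoc matrix_mul_rid orth_QtQ)
  then have "rank (dg d) \<le> rank (Q ** dg d ** transpose Q)"
    by (metis rank_mul_le_left rank_mul_le_right order_trans)
  moreover have "rank (Q ** dg d ** transpose Q) \<le> rank (dg d)"
    by (metis rank_mul_le_left rank_mul_le_right order_trans)
  ultimately show ?thesis by simp
qed

lemma pdet_eval:
  fixes A :: "real^'n^'n"
  assumes Q: "orthogonal_matrix Q" and A: "A = Q ** dg d ** transpose Q"
  shows "pdet A = prod d {i. d i \<noteq> 0}"
proof -
  define NZ where "NZ = {i. d i \<noteq> 0}"
  define Z where "Z = {i. d i = 0}"
  have rk: "rank A = card NZ" using A rank_conj[OF Q] rank_dg unfolding NZ_def by simp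
  have ZNZ: "Z = - NZ" unfolding Z_def NZ_def by auto
  have cz: "CARD('n) - rank A = card Z" unfolding rk ZNZ Compl_eq_Diff_UNIV by (simp add: card_Diff_subset)
  have eq: "det (A + e *\<^sub>R mat 1) / e ^ (CARD('n) - rank A) = prod (\<lambda>i. d i + e) NZ" if e: "e \<noteq> 0" for e
  proof -
    have "Q ** dg (\<lambda>_. e) ** transpose Q = e *\<^sub>R (Q ** mat 1 ** transpose Q)"
      by (simp only: conj_scale mat1_dg dg_scale) simp
    then have "e *\<^sub>R mat 1 = Q ** dg (\<lambda>_. e) ** transpose Q" by (simp add: orth_QQt[OF Q])
    then have "A + e *\<^sub>R mat 1 = Q ** dg (\<lambda>i. d i + e) ** transpose Q"
      unfolding A by (simp only: conj_add dg_add)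
    then have "det (A + e *\<^sub>R mat 1) = prod (\<lambda>i. d i + e) UNIV" by (simp add: det_conj[OF Q])
    also have "UNIV = NZ \<union> Z" unfolding NZ_def Z_def by auto
    also have "prod (\<lambda>i. d i + e) (NZ \<union> Z) = prod (\<lambda>i. d i + e) NZ * prod (\<lambda>i. d i + e) Z"
      by (rule prod.union_disjoint) (auto simp: NZ_def Z_def)
    also have "prod (\<lambda>i. d i + e) Z = e ^ card Z" by (simp add: Z_def)
    finally show ?thesis using e by (simp add: cz)
  qed
  have "((\<lambda>e. \<Prod>i\<in>NZ. d i + e) \<longlongrightarrow> (\<Prod>i\<in>NZ. d i + 0)) (at (0::real))"
    by (intro tendsto_intros)
  then have lim: "((\<lambda>e. \<Prod>i\<in>NZ. d i + e) \<longlongrightarrow> prod d NZ) (at (0::real))" by simp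
  have ev: "eventually (\<lambda>e. (\<Prod>i\<in>NZ. d i + e) = det (A + e *\<^sub>R mat 1) / e ^ (CARD('n) - rank A)) (at (0::real))"
    by (auto simp: eventually_at_filter eq)
  have "((\<lambda>e. det (A + e *\<^sub>R mat 1) / e ^ (CARD('n) - rank A)) \<longlongrightarrow> prod d NZ) (at (0::real))"
    using Lim_transform_eventually[OF lim ev] .
  then show ?thesis unfolding pdet_def NZ_def by (intro tendsto_Lim trivial_limit_at)
qed

declare transpose_matrix_vector[simp del]

lemma dg_zero: "dg (\<lambda>_. 0) = 0"
  by (simp add: dg_def vec_eq_iff)

lemma conj_sym: "transpose (Q ** dg a ** transpose Q) = Q ** dg a ** transpose Q"
  by (simp add: matrix_transpose_mul transpose_dg matrix_mul_assoc)

lemma quad_conj: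
  "(x::real^'n) \<bullet> ((Q ** M ** transpose Q) *v x) = (transpose Q *v x) \<bullet> (M *v (transpose Q *v x))"
  by (simp add: matrix_vector_mul_assoc[symmetric] dot_mat_transpose[of x Q])

lemma quad_dg: "(y::real^'n) \<bullet> (dg a *v y) = (\<Sum>i\<in>UNIV. a i * (y$i)^2)"
  by (simp add: dg_vec inner_vec_def power2_eq_square mult_ac)

lemma orth_inj: "orthogonal_matrix Q \<Longrightarrow> transpose Q *v w = 0 \<Longrightarrow> w = (0::real^'n)"
  by (metis matrix_vector_mul_assoc matrix_vector_mult_0_right matrix_vector_mul_lid orth_QQt)

lemma posdef:
  fixes Q :: "real^'n^'n"
  assumes Q: "orthogonal_matrix Q" and b: "\<forall>i. b i > 0" and w: "w \<noteq> 0"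
  shows "w \<bullet> ((Q ** dg b ** transpose Q) *v w) > 0"
proof -
  define y where "y = transpose Q *v w"
  have "y \<noteq> 0" using orth_inj[OF Q] w unfolding y_def by blast
  then obtain j where j: "y $ j \<noteq> 0" by (auto simp: vec_eq_iff)
  have "0 < b j * (y$j)^2" using b j by simp
  also have "\<dots> \<le> (\<Sum>i\<in>UNIV. b i * (y$i)^2)"
    by (rule member_le_sum) (use b in \<open>auto intro!: mult_nonneg_nonneg simp: less_imp_le\<close>)
  finally show ?thesis by (simp add: quad_conj quad_dg y_def)
qed

lemma eig_nonneg:
  fixes Q :: "real^'n^'n"
  assumes Q: "orthogonal_matrix Q" and psd: "\<forall>x. 0 \<le> x \<bullet> ((Q ** dg d ** transpose Q) *v x)"
  shows "d i \<ge> 0"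
proof -
  define u where "u = Q *v axis i 1"
  have tu: "transpose Q *v u = axis i 1" unfolding u_def
    by (simp add: matrix_vector_mul_assoc orth_QtQ[OF Q])
  have "u \<bullet> ((Q ** dg d ** transpose Q) *v u) = d i"
    by (simp add: quad_conj tu quad_dg axis_def power2_eq_square if_distrib[of "\<lambda>x. _ * x"] cong: if_cong)
  then show ?thesis using psd by metis
qed

lemma proj_unique:
  fixes A1 A2 P1 P2 M1 M2 :: "real^'n^'n"
  assumes "P1 ** A1 = 0" "A1 ** M1 + P1 = mat 1" "P2 ** A2 = 0" "A2 ** M2 + P2 = mat 1"
    "col_space A1 = col_space A2" "transpose P1 = P1" "transpose P2 = P2"
  shows "P1 = P2"
proof -
  have gen: "Pb ** Pa = Pb" if h: "Pb ** Ab = 0" "Aa ** Ma + Pa = mat 1" "col_space Aa = col_space Ab"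
    for Pa Pb Aa Ab Ma :: "real^'n^'n"
  proof -
    have "Pb *v x = (Pb ** Pa) *v x" for x
    proof -
      have "Aa *v (Ma *v x) \<in> col_space Ab" using h(3) unfolding col_space_def by auto
      then obtain z where z: "Aa *v (Ma *v x) = Ab *v z" unfolding col_space_def by auto
      have "x = Aa *v (Ma *v x) + Pa *v x"
        by (metis h(2) matrix_vector_mul_assoc matrix_vector_mul_lid matrix_vector_mult_add_rdistrib)
      then have "Pb *v x = Pb *v (Ab *v z) + Pb *v (Pa *v x)"
        by (metis z matrix_vector_right_distrib)
      also have "Pb *v (Ab *v z) = 0" by (simp add: matrix_vector_mul_assoc h(1))
      finally show ?thesis by (simp add: matrix_vector_mul_assoc)
    qed
    then show ?thesis by (simp add: matrix_eq)
  qed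
  have e1: "P2 ** P1 = P2" using gen[of P2 A2 A1 M1 P1] assms by simp
  have e2: "P1 ** P2 = P1" using gen[of P1 A1 A2 M2 P2] assms by simp
  have "P1 = transpose (P1 ** P2)" using e2 assms(6) by simp
  also have "\<dots> = P2 ** P1" using assms(6,7) by (simp add: matrix_transpose_mul)
  finally show ?thesis using e1 by simp
qed

definition ez :: "('n::finite \<Rightarrow> real) \<Rightarrow> 'n \<Rightarrow> real" where
  "ez d i = (if d i = 0 then 1 else 0)"

lemma proj_props:
  fixes Q :: "real^'n^'n"
  assumes Q: "orthogonal_matrix Q" and A: "A = Q ** dg d ** transpose Q"
  shows "(Q ** dg (ez d) ** transpose Q) ** A = 0"
    "A ** (Q ** dg (\<lambda>i. if d i = 0 then 0 else 1 / d i) ** transpose Q) + Q ** dg (ez d) ** transpose Q = mat 1"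
    "transpose (Q ** dg (ez d) ** transpose Q) = Q ** dg (ez d) ** transpose Q"
proof -
  have "dg (ez d) ** dg d = dg (\<lambda>_. 0)" unfolding dg_mul by (rule arg_cong[where f=dg]) (auto simp: ez_def)
  then show "(Q ** dg (ez d) ** transpose Q) ** A = 0"
    unfolding A conj_mul[OF Q] by (simp add: dg_zero)
  have "dg d ** dg (\<lambda>i. if d i = 0 then 0 else 1 / d i) + dg (ez d) = dg (\<lambda>_. 1)"
    unfolding dg_mul dg_add by (rule arg_cong[where f=dg]) (auto simp: ez_def)
  then show "A ** (Q ** dg (\<lambda>i. if d i = 0 then 0 else 1 / d i) ** transpose Q) + Q ** dg (ez d) ** transpose Q = mat 1"
    unfolding A conj_mul[OF Q] conj_add by (simp add: mat1_dg[symmetric] orth_QQt[OF Q])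
  show "transpose (Q ** dg (ez d) ** transpose Q) = Q ** dg (ez d) ** transpose Q" by (rule conj_sym)
qed

lemma ln_ineq: "s \<ge> 0 \<Longrightarrow> t \<ge> 0 \<Longrightarrow> s + t = 1 \<Longrightarrow> (e::real) > 0 \<Longrightarrow> t * ln e \<le> ln (s + t * e)"
  using ln_concave unfolding concave_on_iff
  by (metis greaterThan_iff ln_one mult_zero_right add_0 mult.right_neutral real_scaleR_def zero_less_one)

lemma logdet_concave:
  fixes Q1 Q2 :: "real^'n^'n"
  assumes Q1: "orthogonal_matrix Q1" and Q2: "orthogonal_matrix Q2"
    and a: "\<forall>i. a i > 0" and b: "\<forall>i. b i > 0"
    and X: "X = Q1 ** dg a ** transpose Q1" and Y: "Y = Q2 ** dg b ** transpose Q2"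
    and st: "s \<ge> 0" "t \<ge> 0" "s + t = 1"
  shows "s * ln (det X) + t * ln (det Y) \<le> ln (det (s *\<^sub>R X + t *\<^sub>R Y))"
proof -
  define R where "R = Q1 ** dg (\<lambda>i. sqrt (a i)) ** transpose Q1"
  define Ri where "Ri = Q1 ** dg (\<lambda>i. 1 / sqrt (a i)) ** transpose Q1"
  have RR: "R ** R = X" unfolding R_def X conj_mul[OF Q1] dg_mul
    using a by (simp add: less_imp_le)
  have one: "dg (\<lambda>i. sqrt (a i) * (1 / sqrt (a i))) = mat 1"
    unfolding mat1_dg by (rule arg_cong[where f=dg]) (use a in \<open>auto simp: fun_eq_iff less_imp_neq[symmetric]\<close>)
  have one': "dg (\<lambda>i. 1 / sqrt (a i) * sqrt (a i)) = mat 1"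
    unfolding mat1_dg by (rule arg_cong[where f=dg]) (use a in \<open>auto simp: fun_eq_iff less_imp_neq[symmetric]\<close>)
  have RRi: "R ** Ri = mat 1" unfolding R_def Ri_def conj_mul[OF Q1] dg_mul one by (rule conj_id[OF Q1])
  have RiR: "Ri ** R = mat 1" unfolding R_def Ri_def conj_mul[OF Q1] dg_mul one' by (rule conj_id[OF Q1])
  have tR: "transpose R = R" unfolding R_def by (rule conj_sym)
  have tRi: "transpose Ri = Ri" unfolding Ri_def by (rule conj_sym)
  have tY: "transpose Y = Y" unfolding Y by (rule conj_sym)
  define Z where "Z = Ri ** Y ** Ri"
  have tZ: "transpose Z = Z" unfolding Z_def by (simp add: matrix_transpose_mul tRi tY matrix_mul_assoc)
  obtain P e where P: "orthogonal_matrix P" and Ze: "Z = P ** dg e ** transpose P"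
    using spectral[OF tZ] by blast
  have epos: "e i > 0" for i
  proof -
    define u where "u = P *v axis i 1"
    have tu: "transpose P *v u = axis i 1" unfolding u_def
      by (simp add: matrix_vector_mul_assoc orth_QtQ[OF P])
    have "u \<bullet> (Z *v u) = e i" unfolding Ze
      by (simp add: quad_conj tu quad_dg axis_def power2_eq_square if_distrib[of "\<lambda>x. _ * x"] cong: if_cong)
    moreover have "u \<bullet> (Z *v u) = (Ri *v u) \<bullet> (Y *v (Ri *v u))"
      unfolding Z_def by (simp add: matrix_vector_mul_assoc[symmetric] dot_mat_transpose[of u Ri] tRi)
    moreover have "Ri *v u \<noteq> 0"
    proof
      assume "Ri *v u = 0"
      then have "u = 0" by (metis RRi matrix_vector_mul_assoc matrix_vector_mul_lid matrix_vector_mult_0_right)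
      then have "axis i (1::real) = 0" using tu by simp
      then show False by (simp add: axis_eq_0_iff)
    qed
    ultimately show ?thesis using posdef[OF Q2 b] unfolding Y by metis
  qed
  have RZR: "R ** Z ** R = Y"
    unfolding Z_def by (metis RRi RiR matrix_mul_assoc matrix_mul_lid matrix_mul_rid)
  have mid: "s *\<^sub>R mat 1 + t *\<^sub>R Z = P ** dg (\<lambda>i. s + t * e i) ** transpose P"
  proof -
    have "P ** dg (\<lambda>_. s) ** transpose P = s *\<^sub>R (P ** mat 1 ** transpose P)"
      by (simp only: conj_scale mat1_dg dg_scale) simp
    then have "s *\<^sub>R mat 1 = P ** dg (\<lambda>_. s) ** transpose P" by (simp add: orth_QQt[OF P])
    moreover have "t *\<^sub>R Z = P ** dg (\<lambda>i. t * e i) ** transpose P"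
      unfolding Ze by (simp only: conj_scale dg_scale)
    ultimately show ?thesis by (simp only: conj_add dg_add)
  qed
  have comb: "s *\<^sub>R X + t *\<^sub>R Y = R ** (s *\<^sub>R mat 1 + t *\<^sub>R Z) ** R"
    by (simp add: matrix_add_ldistrib mmul_add_right mmul_scale_left mmul_scale_right RR[symmetric] RZR[symmetric])
  define D where "D = det R * det R"
  have detR: "det R = (\<Prod>i\<in>UNIV. sqrt (a i))" unfolding R_def by (rule det_conj[OF Q1])
  have "det R > 0" unfolding detR using a by (simp add: prod_pos)
  then have Dpos: "D > 0" unfolding D_def by simp
  have dX: "det X = D" unfolding D_def RR[symmetric] by (simp add: det_mul)
  have dZ: "det Z = prod e UNIV" unfolding Ze by (rule det_conj[OF P])
  have dY: "det Y = D * prod e UNIV" unfolding RZR[symmetric] D_def by (simp add: det_mul dZ)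
  have dXY: "det (s *\<^sub>R X + t *\<^sub>R Y) = D * prod (\<lambda>i. s + t * e i) UNIV"
  proof -
    have "det (s *\<^sub>R mat 1 + t *\<^sub>R Z) = prod (\<lambda>i. s + t * e i) UNIV"
      unfolding mid by (rule det_conj[OF P])
    then show ?thesis unfolding comb D_def by (simp add: det_mul)
  qed
  have pe: "prod e UNIV > 0" using epos by (simp add: prod_pos)
  have pse: "s + t * e i > 0" for i
  proof (cases "s = 0")
    case True
    then have "t = 1" using st by simp
    then show ?thesis using True epos[of i] by simp
  next
    case False
    then have "s > 0" using st by simp
    moreover have "t * e i \<ge> 0" using st epos[of i] by simp
    ultimately show ?thesis by linarith
  qed
  have lnY: "ln (det Y) = ln D + (\<Sum>i\<in>UNIV. ln (e i))"
    unfolding dY using Dpos pe epos by (simp add: ln_mult ln_prod less_imp_neq[symmetric])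
  have lnXY: "ln (det (s *\<^sub>R X + t *\<^sub>R Y)) = ln D + (\<Sum>i\<in>UNIV. ln (s + t * e i))"
    unfolding dXY using Dpos pse by (simp add: ln_mult ln_prod prod_pos less_imp_neq[symmetric])
  have "t * (\<Sum>i\<in>UNIV. ln (e i)) \<le> (\<Sum>i\<in>UNIV. ln (s + t * e i))"
    unfolding sum_distrib_left by (rule sum_mono) (use st epos ln_ineq in auto)
  moreover have h: "s * ln D + t * ln D = ln D" by (metis st(3) distrib_right mult_1)
  ultimately show ?thesis unfolding lnY lnXY dX by (simp add: distrib_left)
qed

theorem lemma3:
  fixes S :: "(real^'n) set" and C :: "(real^'n^'n) set"
  assumes "subspace S"
    and "C \<subseteq> M_set S"
    and "convex C"
  shows "concave_on C (\<lambda>A. ln (pdet A))"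
proof (cases "C = {}")
  case True
  then show ?thesis by (simp add: concave_on_iff)
next
  case False
  then obtain A0 where A0C: "A0 \<in> C" by auto
  then have A0M: "A0 \<in> M_set S" using assms(2) by auto
  then have "transpose A0 = A0" unfolding M_set_def by simp
  then obtain Q0 d0 where Q0: "orthogonal_matrix Q0" and A0: "A0 = Q0 ** dg d0 ** transpose Q0"
    using spectral by blast
  define P where "P = Q0 ** dg (ez d0) ** transpose Q0"
  have key: "pdet A = det (A + P) \<and> (\<exists>Q a. orthogonal_matrix Q \<and> (\<forall>i. a i > 0) \<and> A + P = Q ** dg a ** transpose Q)"
    if AC: "A \<in> C" for A
  proof -
    have AM: "A \<in> M_set S" using AC assms(2) by auto
    then have symA: "transpose A = A" and colA: "col_space A = S" and psd: "\<forall>x. 0 \<le> x \<bullet> (A *v x)"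
      unfolding M_set_def by auto
    obtain Q d where Q: "orthogonal_matrix Q" and A: "A = Q ** dg d ** transpose Q"
      using spectral[OF symA] by blast
    have PA: "Q ** dg (ez d) ** transpose Q = P"
    proof (rule proj_unique)
      show "(Q ** dg (ez d) ** transpose Q) ** A = 0" using proj_props[OF Q A] by blast
      show "A ** (Q ** dg (\<lambda>i. if d i = 0 then 0 else 1 / d i) ** transpose Q) + Q ** dg (ez d) ** transpose Q = mat 1"
        using proj_props[OF Q A] by blast
      show "P ** A0 = 0" unfolding P_def using proj_props[OF Q0 A0] by blast
      show "A0 ** (Q0 ** dg (\<lambda>i. if d0 i = 0 then 0 else 1 / d0 i) ** transpose Q0) + P = mat 1"
        unfolding P_def using proj_props[OF Q0 A0] by blast
      show "col_space A = col_space A0" using colA A0M unfolding M_set_def by simp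
      show "transpose (Q ** dg (ez d) ** transpose Q) = Q ** dg (ez d) ** transpose Q" by (rule conj_sym)
      show "transpose P = P" unfolding P_def by (rule conj_sym)
    qed
    have dnn: "d i \<ge> 0" for i using eig_nonneg[OF Q] psd unfolding A by blast
    have AP: "A + P = Q ** dg (\<lambda>i. d i + ez d i) ** transpose Q"
      unfolding PA[symmetric] A by (simp only: conj_add dg_add)
    have apos: "\<forall>i. d i + ez d i > 0" using dnn by (auto simp: ez_def le_less)
    have "pdet A = prod d {i. d i \<noteq> 0}" by (rule pdet_eval[OF Q A])
    also have "\<dots> = prod (\<lambda>i. if d i \<noteq> 0 then d i else 1) UNIV"
      using prod.inter_filter[of UNIV d "\<lambda>i. d i \<noteq> 0"] by simp
    also have "\<dots> = prod (\<lambda>i. d i + ez d i) UNIV" by (rule prod.cong) (auto simp: ez_def)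
    also have "\<dots> = det (A + P)" unfolding AP by (rule det_conj[OF Q, symmetric])
    finally have "pdet A = det (A + P)" .
    moreover have "\<exists>Q a. orthogonal_matrix Q \<and> (\<forall>i. a i > 0) \<and> A + P = Q ** dg a ** transpose Q"
      using AP apos Q by (intro exI[of _ Q] exI[of _ "\<lambda>i. d i + ez d i"]) simp
    ultimately show ?thesis by blast
  qed
  show ?thesis unfolding concave_on_iff
  proof (intro conjI ballI allI impI)
    show "convex C" by (rule assms(3))
    fix A B and u v :: real
    assume AC: "A \<in> C" and BC: "B \<in> C" and uv: "0 \<le> u" "0 \<le> v" "u + v = 1"
    have ABC: "u *\<^sub>R A + v *\<^sub>R B \<in> C" using assms(3) AC BC uv by (simp add: convexD)
    obtain Q1 a where Q1: "orthogonal_matrix Q1" "\<forall>i. a i > 0" "A + P = Q1 ** dg a ** transpose Q1"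
      using key[OF AC] by blast
    obtain Q2 b where Q2: "orthogonal_matrix Q2" "\<forall>i. b i > 0" "B + P = Q2 ** dg b ** transpose Q2"
      using key[OF BC] by blast
    have "u *\<^sub>R A + v *\<^sub>R B + P = u *\<^sub>R (A + P) + v *\<^sub>R (B + P)"
    proof -
      have "P = u *\<^sub>R P + v *\<^sub>R P" using uv by (metis scaleR_add_left scaleR_one)
      then show ?thesis by (simp add: algebra_simps)
    qed
    then have "ln (pdet (u *\<^sub>R A + v *\<^sub>R B)) = ln (det (u *\<^sub>R (A + P) + v *\<^sub>R (B + P)))"
      using key[OF ABC] by simp
    moreover have "u * ln (det (A + P)) + v * ln (det (B + P)) \<le> ln (det (u *\<^sub>R (A + P) + v *\<^sub>R (B + P)))"
      by (rule logdet_concave[OF Q1(1) Q2(1) Q1(2) Q2(2) Q1(3) Q2(3) uv])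
    ultimately show "u * ln (pdet A) + v * ln (pdet B) \<le> ln (pdet (u *\<^sub>R A + v *\<^sub>R B))"
      using key[OF AC] key[OF BC] by simp
  qed
qed

end
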